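(* Let $n\ge 2$ be an integer. If $G$ is a graph on $2n+1$ vertices with at least $n^2+n$ edges such that $G$ does not contain two distinct vertices of the same degree joined by a path of length three, then $G$ is isomorphic to the complete bipartite graph $K_{n,n+1}$. (Equivalently, $K_{n,n+1}$ is the unique such graph.)
   Context: A path of length three joining vertices $a$ and $b$ is a path $a\,x\,y\,b$ with four distinct vertices and three edges $ax,xy,yb$. Graphs are finite and simple. *)

theory Defs
  imports Main
begin

definition simple_graph :: "'a set \<Rightarrow> ('a \<Rightarrow> 'a \<Rightarrow> bool) \<Rightarrow> bool" where
  "simple_graph V E \<longleftrightarrow> finite V \<and>
     (\<forall>u v. E u v \<longrightarrow> u \<in> V \<and> v \<in> V) \<and>
     (\<forall>u v. E u v \<longrightarrow> E v u) \<and> (\<forall>v. \<not> E v v)"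

definition edge_set :: "'a set \<Rightarrow> ('a \<Rightarrow> 'a \<Rightarrow> bool) \<Rightarrow> 'a set set" where
  "edge_set V E = {{u, v} | u v. u \<in> V \<and> v \<in> V \<and> E u v}"

definition num_edges :: "'a set \<Rightarrow> ('a \<Rightarrow> 'a \<Rightarrow> bool) \<Rightarrow> nat" where
  "num_edges V E = card (edge_set V E)"

definition degree :: "'a set \<Rightarrow> ('a \<Rightarrow> 'a \<Rightarrow> bool) \<Rightarrow> 'a \<Rightarrow> nat" where
  "degree V E v = card {u \<in> V. E v u}"

definition path3 :: "'a set \<Rightarrow> ('a \<Rightarrow> 'a \<Rightarrow> bool) \<Rightarrow> 'a \<Rightarrow> 'a \<Rightarrow> bool" where
  "path3 V E a b \<longleftrightarrow> (\<exists>x y. a \<in> V \<and> x \<in> V \<and> y \<in> V \<and> b \<in> V \<and>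
      distinct [a, x, y, b] \<and> E a x \<and> E x y \<and> E y b)"

definition graph_iso :: "'a set \<Rightarrow> ('a \<Rightarrow> 'a \<Rightarrow> bool) \<Rightarrow> 'b set \<Rightarrow> ('b \<Rightarrow> 'b \<Rightarrow> bool) \<Rightarrow> bool" where
  "graph_iso V E W F \<longleftrightarrow> (\<exists>f. bij_betw f V W \<and> (\<forall>u\<in>V. \<forall>v\<in>V. E u v \<longleftrightarrow> F (f u) (f v)))"

definition Kbip_verts :: "nat \<Rightarrow> nat \<Rightarrow> nat set" where
  "Kbip_verts m k = {0..<m+k}"

definition Kbip_edge :: "nat \<Rightarrow> nat \<Rightarrow> nat \<Rightarrow> nat \<Rightarrow> bool" where
  "Kbip_edge m k i j \<longleftrightarrow> i < m + k \<and> j < m + k \<and> ((i < m \<and> m \<le> j) \<or> (j < m \<and> m \<le> i))"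

end

theory Submission
  imports Defs
begin

locale sgraph =
  fixes V :: "'a set" and E :: "'a \<Rightarrow> 'a \<Rightarrow> bool"
  assumes sg: "simple_graph V E"
begin

abbreviation nb where "nb v \<equiv> {u \<in> V. E v u}"

lemma finV: "finite V" using sg unfolding simple_graph_def by blast
lemma inV: "E u v \<Longrightarrow> u \<in> V \<and> v \<in> V" using sg unfolding simple_graph_def by blast
lemma symE: "E u v \<Longrightarrow> E v u" using sg unfolding simple_graph_def by blast
lemma irr: "\<not> E v v" using sg unfolding simple_graph_def by blast
lemma deg_def': "degree V E v = card (nb v)" unfolding degree_def by simp
lemma fin_nb: "finite (nb v)" using finV by simp

lemma handshake: "(\<Sum>v\<in>V. degree V E v) = 2 * num_edges V E"
proof -
  let ?D = "Sigma V nb"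
  have c1: "card ?D = (\<Sum>v\<in>V. degree V E v)"
    by (simp add: card_SigmaI finV deg_def')
  let ?f = "\<lambda>p. {fst p, snd p}"
  have img: "?f ` ?D = edge_set V E"
  proof
    show "?f ` ?D \<subseteq> edge_set V E" unfolding edge_set_def using inV by fastforce
    show "edge_set V E \<subseteq> ?f ` ?D"
    proof
      fix e assume "e \<in> edge_set V E"
      then obtain u v where "e = {u,v}" "u \<in> V" "v \<in> V" "E u v" unfolding edge_set_def by blast
      then show "e \<in> ?f ` ?D" by (intro image_eqI[of _ _ "(u,v)"]) auto
    qed
  qed
  have D_eq: "?D = (\<Union>e\<in>edge_set V E. {p \<in> ?D. ?f p = e})" using img by blast
  have fib: "card {p \<in> ?D. ?f p = e} = 2" if e_in: "e \<in> edge_set V E" for e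
  proof -
    obtain a b where e: "e = {a,b}" "a \<in> V" "b \<in> V" "E a b"
      using e_in unfolding edge_set_def by blast
    have ab: "a \<noteq> b" using e irr by blast
    have "{p \<in> ?D. ?f p = e} = {(a,b),(b,a)}"
    proof
      show "{p \<in> ?D. ?f p = e} \<subseteq> {(a,b),(b,a)}"
      proof
        fix p assume "p \<in> {p \<in> ?D. ?f p = e}"
        then obtain u v where p: "p = (u,v)" "u \<in> V" "E u v" "{u,v} = {a,b}"
          using e by auto
        then show "p \<in> {(a,b),(b,a)}" by (auto simp: doubleton_eq_iff)
      qed
      show "{(a,b),(b,a)} \<subseteq> {p \<in> ?D. ?f p = e}"
        using e symE by auto
    qed
    then show ?thesis using ab by simp
  qed
  have fin_es: "finite (edge_set V E)"
  proof -
    have "finite ?D" using finV by (simp add: finite_SigmaI)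
    then have "finite (?f ` ?D)" by (rule finite_imageI)
    then show ?thesis unfolding img .
  qed
  have "card ?D = (\<Sum>e\<in>edge_set V E. card {p \<in> ?D. ?f p = e})"
    apply (subst D_eq)
  proof (rule card_UN_disjoint[OF fin_es])
    show "\<forall>e\<in>edge_set V E. finite {p \<in> ?D. ?f p = e}"
      using finV by (simp add: finite_SigmaI)
    show "\<forall>e\<in>edge_set V E. \<forall>e'\<in>edge_set V E. e \<noteq> e' \<longrightarrow>
      {p \<in> ?D. ?f p = e} \<inter> {p \<in> ?D. ?f p = e'} = {}" by blast
  qed
  also have "\<dots> = 2 * card (edge_set V E)" using fib by simp
  finally show ?thesis using c1 unfolding num_edges_def by simp
qed

lemma nb_sub: "nb v \<subseteq> V" by auto
lemma not_in_nb: "v \<notin> nb v" using irr by auto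
lemma nb_sym: "u \<in> nb v \<longleftrightarrow> v \<in> nb u" using inV symE by blast

end

lemma three_elems:
  assumes "finite A" "2 < card A"
  shows "\<exists>a b c. a \<in> A \<and> b \<in> A \<and> c \<in> A \<and> a \<noteq> b \<and> a \<noteq> c \<and> b \<noteq> c"
proof -
  obtain a where a: "a \<in> A" using assms by (metis card.empty ex_in_conv not_less_zero)
  have c1: "1 < card (A - {a})" using assms a by simp
  then obtain b where b: "b \<in> A - {a}" by (metis card.empty ex_in_conv not_less_zero)
  have "0 < card (A - {a} - {b})" using c1 b assms by simp
  then obtain c where c: "c \<in> A - {a} - {b}" by (metis card.empty ex_in_conv less_irrefl)
  show ?thesis using a b c by blast
qed

lemma gauss_aux:
  fixes a t :: nat shows "2 * (\<Sum>v\<in>{a+2..a+Suc t}. v - a) + 2 = Suc t * (Suc t + 1)"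
proof (induction t)
  case 0
  then show ?case by simp
next
  case (Suc t)
  have eq: "{a+2..a+Suc (Suc t)} = insert (a + Suc (Suc t)) {a+2..a+Suc t}"
    by (simp add: atLeastAtMostSuc_conv)
  have "(\<Sum>v\<in>{a+2..a+Suc (Suc t)}. v - a) = (Suc (Suc t)) + (\<Sum>v\<in>{a+2..a+Suc t}. v - a)"
    unfolding eq by simp
  then show ?case using Suc by (simp add: algebra_simps)
qed

lemma gauss:
  fixes a t :: nat
  assumes "1 \<le> t" shows "2 * (\<Sum>v\<in>{a+2..a+t}. v - a) + 2 = t * (t + 1)"
proof -
  obtain t' where "t = Suc t'" using assms by (cases t) auto
  then show ?thesis using gauss_aux by simp
qed

locale p4free = sgraph +
  fixes n :: nat
  assumes n2: "2 \<le> n" and cardV: "card V = 2*n+1"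
    and cond: "\<forall>a\<in>V. \<forall>b\<in>V. a \<noteq> b \<and> degree V E a = degree V E b \<longrightarrow> \<not> path3 V E a b"
begin

abbreviation dg where "dg v \<equiv> degree V E v"

lemma nopath:
  assumes "E a p" "E p q" "E q b" "distinct [a,p,q,b]" "dg a = dg b"
  shows False
proof -
  have "a \<in> V" "b \<in> V" "p \<in> V" "q \<in> V" using assms inV by blast+
  then have "path3 V E a b" unfolding path3_def using assms by blast
  moreover have "a \<noteq> b" using assms(4) by simp
  ultimately show False using cond \<open>a \<in> V\<close> \<open>b \<in> V\<close> assms(5) by blast
qed

lemma L3:
  assumes "E x a" "E x w" "E w b" "a \<noteq> b" "dg a = dg b" "a \<noteq> x" "b \<noteq> x"
  shows "w = a"
proof (rule ccontr)
  assume wa: "w \<noteq> a"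
  have "w \<noteq> x" using assms(2) irr by blast
  moreover have "w \<noteq> b" using assms(3) irr by blast
  ultimately have "distinct [a,x,w,b]" using assms wa by auto
  then show False using nopath[of a x w b] symE[OF assms(1)] assms by blast
qed

end

locale maxv = p4free +
  fixes x
  assumes xV: "x \<in> V" and xmax: "\<forall>v\<in>V. dg v \<le> dg x"
    and medges: "n^2 + n \<le> num_edges V E"
begin

abbreviation "Y \<equiv> nb x"
abbreviation "R \<equiv> V - nb x"
abbreviation "\<Delta> \<equiv> dg x"
abbreviation "\<rho> \<equiv> card (V - nb x)"
abbreviation "j \<equiv> n - card (V - nb x)"

lemma finY: "finite Y" using fin_nb .
lemma finR: "finite R" using finV by simp
lemma cardY: "card Y = \<Delta>" by (simp add: deg_def')
lemma xR: "x \<in> R" using xV not_in_nb by blast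
lemma memY: "y \<in> Y \<longleftrightarrow> E x y" using inV by blast
lemma cardVR: "\<rho> + \<Delta> = 2*n+1"
proof -
  have VU: "V = Y \<union> R" by blast
  have "card V = card Y + card R"
    by (subst VU, rule card_Un_disjoint[OF finY finR]) blast
  then show ?thesis using cardV cardY by simp
qed

lemma sumsplit: "(\<Sum>v\<in>V. dg v) = (\<Sum>v\<in>Y. dg v) + (\<Sum>v\<in>R. dg v)"
proof -
  have "V = Y \<union> R" by blast
  then show ?thesis using sum.union_disjoint[OF finY finR, of dg] by (metis Diff_disjoint)
qed

lemma tot: "2*(n^2+n) \<le> (\<Sum>v\<in>Y. dg v) + (\<Sum>v\<in>R. dg v)"
  using handshake medges sumsplit by simp

lemma SR_le: "(\<Sum>v\<in>R. dg v) \<le> \<rho> * \<Delta>"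
  using sum_bounded_above[of R dg \<Delta>] xmax by simp

lemma SY_le: "(\<Sum>v\<in>Y. dg v) \<le> \<Delta> * \<Delta>"
  using sum_bounded_above[of Y dg \<Delta>] xmax cardY nb_sub by auto

lemma Delta_gt: "n < \<Delta>"
proof (rule ccontr)
  assume "\<not> n < \<Delta>"
  then have d: "\<Delta> \<le> n" by simp
  have "(\<Sum>v\<in>V. dg v) \<le> card V * \<Delta>" using sum_bounded_above[of V dg \<Delta>] xmax by simp
  also have "\<dots> \<le> (2*n+1) * n" unfolding cardV by (rule mult_le_mono2[OF d])
  finally have "(\<Sum>v\<in>V. dg v) \<le> (2*n+1)*n" .
  moreover have "2*(n^2+n) \<le> (\<Sum>v\<in>V. dg v)" using tot sumsplit by simp
  ultimately show False using n2 by (simp add: power2_eq_square algebra_simps)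
qed

lemma rho_le: "\<rho> \<le> n" using cardVR Delta_gt by simp
lemma n_eq: "n = \<rho> + j" using rho_le by simp
lemma Delta_eq: "\<Delta> = \<rho> + 2*j + 1" using cardVR rho_le by simp

lemma TW:
  assumes "y \<in> Y" "b \<in> Y" "y \<noteq> b" "dg y = dg b"
  shows "nb b \<subseteq> insert y R"
proof
  fix z assume z: "z \<in> nb b"
  show "z \<in> insert y R"
  proof (cases "z \<in> Y")
    case True
    have "z = y"
      apply (rule L3[of x y z b])
      using assms True z symE not_in_nb by auto
    then show ?thesis by simp
  next
    case False
    then show ?thesis using z by blast
  qed
qed

lemma TWc:
  assumes "y \<in> Y" "b \<in> Y" "y \<noteq> b" "dg y = dg b"
  shows "dg b \<le> \<rho> + 1"
proof -
  have "dg b \<le> card (insert y R)"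
    unfolding deg_def' using TW[OF assms] finR by (simp add: card_mono)
  also have "\<dots> \<le> \<rho> + 1" using finR by (simp add: card_insert_le_m1 card_insert_if)
  finally show ?thesis .
qed

lemma C8:
  assumes "y \<in> Y" "b \<in> Y" "dg y = dg b" "\<rho> + 2 \<le> dg b"
  shows "y = b"
  using TWc[of y b] assms by fastforce

end

context maxv begin

lemma C9: "card {y\<in>Y. dg y = \<rho> + 1} \<le> 2"
proof (rule ccontr)
  assume "\<not> ?thesis"
  then have "2 < card {y\<in>Y. dg y = \<rho> + 1}" by simp
  moreover have fin1: "finite {y\<in>Y. dg y = \<rho> + 1}" using finV by simp
  ultimately obtain a b c where abc: "a \<in> {y\<in>Y. dg y = \<rho> + 1}" "b \<in> {y\<in>Y. dg y = \<rho> + 1}"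
     "c \<in> {y\<in>Y. dg y = \<rho> + 1}" "a \<noteq> b" "a \<noteq> c" "b \<noteq> c"
    using three_elems[OF fin1] by blast
  have s1: "nb b \<subseteq> insert a R" using TW[of a b] abc by auto
  have s2: "nb b \<subseteq> insert c R" using TW[of c b] abc by auto
  have "nb b \<subseteq> R" using s1 s2 abc(5) by blast
  then have "dg b \<le> \<rho>" unfolding deg_def' using finR by (simp add: card_mono)
  then show False using abc by simp
qed

lemma R_minus_x: "j = 0 \<Longrightarrow> \<exists>r. r \<in> R \<and> r \<noteq> x"
proof -
  assume "j = 0"
  then have "\<rho> = n" using n_eq by simp
  then have "2 \<le> card R" using n2 by simp
  then have "1 \<le> card (R - {x})" using xR finR by simp
  then have "card (R - {x}) \<noteq> 0" by simp
  then have "R - {x} \<noteq> {}" by (metis card.empty)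
  then show ?thesis by blast
qed

lemma C10:
  assumes j0: "j = 0" and y: "y \<in> Y" "dg y = \<Delta>" and b: "b \<in> Y" "dg b = \<Delta>"
  shows "y = b"
proof (rule ccontr)
  assume yb: "y \<noteq> b"
  have D1: "\<Delta> = \<rho> + 1" using Delta_eq j0 by simp
  have yR: "y \<notin> R" "b \<notin> R" using y b by auto
  have cins: "card (insert y R) = \<rho> + 1" "card (insert b R) = \<rho> + 1" using yR finR by auto
  have s1: "nb b \<subseteq> insert y R" using TW[of y b] y b yb by simp
  have s2: "nb y \<subseteq> insert b R" using TW[of b y] y b yb by simp
  have nbb: "nb b = insert y R"
    by (rule card_subset_eq[OF _ s1]) (use finR cins D1 b deg_def'[of b] in simp_all)
  have nby: "nb y = insert b R"
    by (rule card_subset_eq[OF _ s2]) (use finR cins D1 y deg_def'[of y] in simp_all)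
  obtain r where r: "r \<in> R" "r \<noteq> x" using R_minus_x j0 by blast
  have e1: "E x b" using b by simp
  have e2: "E b r" using nbb r by auto
  have e3: "E r y" using nby r symE by auto
  have "distinct [x,b,r,y]" using r y b yb xR by auto
  then show False using nopath[OF e1 e2 e3] y by simp
qed

end

context maxv begin

lemma C11:
  assumes y0: "y0 \<in> Y" "dg y0 = \<Delta>"
  shows "\<exists>r0. r0 \<in> R \<and> r0 \<noteq> x \<and> dg r0 + 1 \<le> \<rho>"
proof -
  have xy0: "E x y0" using y0 by simp
  have y0x: "y0 \<noteq> x" using xy0 irr by blast
  have noP: "False" if "E x w" "E w z" "E z y0" "w \<noteq> y0" "z \<noteq> x" for w z
  proof -
    have "w \<noteq> x" using that(1) irr by blast
    moreover have "z \<noteq> w" using that(2) irr by blast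
    moreover have "z \<noteq> y0" using that(3) irr by blast
    ultimately have "distinct [x,w,z,y0]" using that y0x by auto
    then show False using nopath[OF that(1-3)] y0 by simp
  qed
  have xnY: "x \<notin> Y" using not_in_nb by simp
  have ex: "\<exists>r0. E y0 r0 \<and> r0 \<notin> Y \<and> r0 \<noteq> x"
  proof (rule ccontr)
    assume H: "\<not> ?thesis"
    have sub: "nb y0 \<subseteq> insert x (Y - {y0})"
    proof
      fix z assume z: "z \<in> nb y0"
      then have "z \<noteq> y0" using irr by blast
      then show "z \<in> insert x (Y - {y0})" using H z by blast
    qed
    have fin2: "finite (insert x (Y - {y0}))" using finY by simp
    have "card (Y - {y0}) = \<Delta> - 1" using finY y0 cardY by (simp add: card_Diff_singleton)
    moreover have "1 \<le> \<Delta>" using Delta_gt by simp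
    moreover have "card (insert x (Y - {y0})) = Suc (card (Y - {y0}))"
      by (rule card_insert_disjoint) (use finY xnY in auto)
    ultimately have c2: "card (insert x (Y - {y0})) = \<Delta>" by simp
    have eq: "nb y0 = insert x (Y - {y0})"
      by (rule card_subset_eq[OF fin2 sub]) (use c2 y0 deg_def'[of y0] in simp)
    have adj: "E y0 w" if "w \<in> Y - {y0}" for w using eq that by blast
    have indep: "\<not> E w w'" if "w \<in> Y - {y0}" "w' \<in> Y - {y0}" for w w'
    proof
      assume "E w w'"
      moreover have "E x w" using that by simp
      moreover have "E w' y0" using adj[OF that(2)] symE by blast
      moreover have "w \<noteq> y0" using that by simp
      moreover have "w' \<noteq> x" using that xnY by blast
      ultimately show False using noP by blast
    qed
    have nbw: "nb w \<subseteq> insert y0 R" if "w \<in> Y - {y0}" for w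
    proof
      fix z assume z: "z \<in> nb w"
      show "z \<in> insert y0 R"
      proof (cases "z \<in> Y")
        case True
        then show ?thesis using indep[OF that, of z] z by blast
      next
        case False
        then show ?thesis using z by blast
      qed
    qed
    have dgw_le: "dg w \<le> \<rho> + 1" if "w \<in> Y - {y0}" for w
    proof -
      have "dg w \<le> card (insert y0 R)" unfolding deg_def'
        using nbw[OF that] finR by (simp add: card_mono)
      also have "\<dots> \<le> \<rho> + 1" using finR by (simp add: card_insert_if)
      finally show ?thesis .
    qed
    have dgw_ge: "2 \<le> dg w" if "w \<in> Y - {y0}" for w
    proof -
      have "E w x" using that symE[of x w] by simp
      moreover have "E w y0" using adj[OF that] symE[of y0 w] by simp
      ultimately have "{x, y0} \<subseteq> nb w" using xV y0 by simp
      then have "card {x, y0} \<le> dg w" unfolding deg_def' using fin_nb by (rule card_mono[rotated])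
      then show ?thesis using y0x by simp
    qed
    have dgw_ne: "dg w \<noteq> \<Delta>" if "w \<in> Y - {y0}" for w
    proof (cases "j = 0")
      case True
      show ?thesis using C10[OF True, of w y0] that y0 by auto
    next
      case False
      then show ?thesis using dgw_le[OF that] Delta_eq by simp
    qed
    have inj: "inj_on dg (Y - {y0})"
    proof (rule inj_onI)
      fix w w' assume w: "w \<in> Y - {y0}" and w': "w' \<in> Y - {y0}" and d: "dg w = dg w'"
      show "w = w'"
      proof (rule ccontr)
        assume ww: "w \<noteq> w'"
        have "y0 = w'"
          apply (rule L3[of x w' y0 w])
          using w w' d ww xy0 adj[OF w] symE[of y0 w] xnY by auto
        then show False using w' by simp
      qed
    qed
    have "card (Y - {y0}) \<le> card ({2..\<rho>+1} - {\<Delta>})"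
      by (rule card_inj_on_le[OF inj]) (use dgw_le dgw_ge dgw_ne in auto)
    moreover have "card ({2..\<rho>+1} - {\<Delta>}) < \<Delta> - 1"
    proof (cases "j = 0")
      case True
      then have D1: "\<Delta> = \<rho> + 1" using Delta_eq by simp
      have "\<rho> = n" using True n_eq by simp
      then have "\<Delta> \<in> {2..\<rho>+1}" using D1 n2 by simp
      then have "card ({2..\<rho>+1} - {\<Delta>}) = \<rho> - 1" by (simp add: card_Diff_singleton)
      then show ?thesis using D1 n2 \<open>\<rho> = n\<close> by simp
    next
      case False
      have "card ({2..\<rho>+1} - {\<Delta>}) \<le> card {2..\<rho>+1}" by (rule card_mono) auto
      then show ?thesis using False Delta_eq by simp
    qed
    ultimately show False using \<open>card (Y - {y0}) = \<Delta> - 1\<close> by simp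
  qed
  then obtain r0 where r0: "E y0 r0" "r0 \<notin> Y" "r0 \<noteq> x" by blast
  have r0R: "r0 \<in> R" using r0 inV by blast
  have sub: "nb r0 \<subseteq> insert y0 (R - {x, r0})"
  proof
    fix z assume z: "z \<in> nb r0"
    have zr: "z \<noteq> r0" using z irr by blast
    have zx: "z \<noteq> x"
    proof
      assume "z = x"
      then have "E x r0" using z symE[of r0 x] by simp
      then show False using r0(2) xV inV by blast
    qed
    have zy: "z = y0" if zY: "z \<in> Y"
    proof (rule ccontr)
      assume zy0: "z \<noteq> y0"
      have e1: "E x z" using zY by simp
      have e2: "E z r0" using z symE[of r0 z] by simp
      have e3: "E r0 y0" using r0(1) symE[of y0 r0] by simp
      show False by (rule noP[OF e1 e2 e3 zy0 r0(3)])
    qed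
    show "z \<in> insert y0 (R - {x, r0})" using z zr zx zy by blast
  qed
  have fR2: "finite (R - {x, r0})" using finR by blast
  have "dg r0 \<le> card (insert y0 (R - {x, r0}))" unfolding deg_def'
    using sub fR2 by (simp add: card_mono)
  also have "\<dots> \<le> card (R - {x, r0}) + 1" using fR2 by (simp add: card_insert_if)
  finally have d1: "dg r0 \<le> card (R - {x, r0}) + 1" .
  have sub2: "{x, r0} \<subseteq> R" using xR r0R by blast
  have c3: "card (R - {x, r0}) = \<rho> - card {x, r0}"
    by (rule card_Diff_subset[OF _ sub2]) simp
  have c4: "card {x, r0} = 2" using r0(3) by simp
  have "card {x, r0} \<le> \<rho>" using finR sub2 by (rule card_mono)
  then have "2 \<le> \<rho>" using c4 by simp
  then have "dg r0 + 1 \<le> \<rho>" using d1 c3 c4 by simp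
  then show ?thesis using r0R r0(3) by blast
qed

end

context maxv begin

lemma SumY:
  assumes T: "\<forall>y\<in>Y. dg y \<le> T"
  shows "(\<Sum>y\<in>Y. dg y) \<le> \<rho>*\<Delta> + card {y\<in>Y. dg y = \<rho>+1} + (\<Sum>v\<in>{\<rho>+2..T}. v - \<rho>)"
proof -
  define Y1 where "Y1 = {y\<in>Y. dg y = \<rho>+1}"
  define P where "P = {y\<in>Y. \<rho>+2 \<le> dg y}"
  define g where "g = (\<lambda>y. if \<rho>+2 \<le> dg y then dg y - \<rho> else 0)"
  have pw: "dg y \<le> \<rho> + (if y \<in> Y1 then 1 else 0) + g y" if "y \<in> Y" for y
    using that unfolding Y1_def g_def by auto
  have s1: "(\<Sum>y\<in>Y. dg y) \<le> (\<Sum>y\<in>Y. \<rho> + (if y \<in> Y1 then 1 else 0) + g y)"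
    by (rule sum_mono) (use pw in blast)
  have s2: "(\<Sum>y\<in>Y. \<rho> + (if y \<in> Y1 then 1 else 0) + g y)
      = \<rho>*\<Delta> + (\<Sum>y\<in>Y. (if y \<in> Y1 then 1 else 0)) + (\<Sum>y\<in>Y. g y)"
    by (simp add: sum.distrib cardY)
  have Y1Y: "Y1 \<subseteq> Y" unfolding Y1_def by blast
  have s3: "(\<Sum>y\<in>Y. (if y \<in> Y1 then 1 else 0::nat)) = card Y1"
  proof -
    have "(\<Sum>y\<in>Y. (if y \<in> Y1 then 1 else 0::nat)) = (\<Sum>y\<in>Y1. (if y \<in> Y1 then 1 else 0::nat))"
      by (rule sum.mono_neutral_right[OF finY Y1Y]) simp
    also have "\<dots> = (\<Sum>y\<in>Y1. 1)" by simp
    finally show ?thesis by simp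
  qed
  have s4: "(\<Sum>y\<in>Y. g y) = (\<Sum>y\<in>P. dg y - \<rho>)"
    unfolding P_def g_def using sum.inter_filter[OF finY, of "\<lambda>y. dg y - \<rho>" "\<lambda>y. \<rho>+2 \<le> dg y"]
    by simp
  have inj: "inj_on dg P"
  proof (rule inj_onI)
    fix a b assume a: "a \<in> P" and b: "b \<in> P" and d: "dg a = dg b"
    have "a \<in> Y" "b \<in> Y" "\<rho> + 2 \<le> dg b" using a b unfolding P_def by auto
    then show "a = b" using C8[of a b] d by blast
  qed
  have s5: "(\<Sum>y\<in>P. dg y - \<rho>) = (\<Sum>v\<in>dg ` P. v - \<rho>)"
    using sum.reindex[OF inj, of "\<lambda>v. v - \<rho>"] by simp
  have s6: "(\<Sum>v\<in>dg ` P. v - \<rho>) \<le> (\<Sum>v\<in>{\<rho>+2..T}. v - \<rho>)"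
  proof (rule sum_mono2)
    show "dg ` P \<subseteq> {\<rho>+2..T}" using T unfolding P_def by auto
  qed simp_all
  show ?thesis using s1 s2 s3 s4 s5 s6 unfolding Y1_def by linarith
qed

end

lemma lin_aux:
  fixes r d J S1 S2 c G A B C X :: nat
  assumes "2*A + 4*B + 2*C + 2*r + 2*J \<le> S1 + S2" "X = A + 2*B + r" "2*G = 4*C + 6*J"
    "d = r + 2*J + 1" "1 \<le> J" "S1 \<le> X + c + G" "c \<le> 2" "S2 + d + 1 \<le> X + r"
  shows False
  using assms by linarith

lemma arithA:
  fixes r d J n S1 S2 c G :: nat
  assumes "n = r + J" "d = r + 2*J + 1" "1 \<le> J" "2*(n^2+n) \<le> S1 + S2"
    "S1 \<le> r*d + c + G" "c \<le> 2" "S2 + d + 1 \<le> r*d + r" "2*G + 2 = (2*J+1)*(2*J+1+1)"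
  shows False
proof -
  have e1: "2*(n^2 + n) = 2*(r*r) + 4*(r*J) + 2*(J*J) + 2*r + 2*J" using assms(1)
    by (simp add: power2_eq_square algebra_simps)
  have e2: "r*d = r*r + 2*(r*J) + r" using assms(2) by (simp add: algebra_simps)
  have e3: "2*G = 4*(J*J) + 6*J" using assms(8) by (simp add: algebra_simps)
  show False
    by (rule lin_aux[of "r*r" "r*J" "J*J" r J S1 S2 "r*d" G d c])
      (use assms e1 e2 e3 in simp_all)
qed

context maxv begin

lemma SR_minus:
  assumes r0: "r0 \<in> R" "dg r0 + 1 \<le> \<rho>"
  shows "(\<Sum>v\<in>R. dg v) + \<Delta> + 1 \<le> \<rho>*\<Delta> + \<rho>"
proof -
  have e: "(\<Sum>v\<in>R. dg v) = dg r0 + (\<Sum>v\<in>R-{r0}. dg v)" using sum.remove[OF finR r0(1)] .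
  have "(\<Sum>v\<in>R-{r0}. dg v) \<le> card (R - {r0}) * \<Delta>"
    using sum_bounded_above[of "R-{r0}" dg \<Delta>] xmax by simp
  moreover have "card (R - {r0}) = \<rho> - 1" using r0 finR by simp
  ultimately have "(\<Sum>v\<in>R-{r0}. dg v) \<le> (\<rho> - 1) * \<Delta>" by simp
  moreover obtain k where k: "\<rho> = Suc k" using r0(2) by (cases "\<rho>") auto
  ultimately show ?thesis using e r0(2) by simp
qed

lemma caseA:
  assumes y0: "y0 \<in> Y" "dg y0 = \<Delta>"
  shows False
proof -
  obtain r0 where r0: "r0 \<in> R" "r0 \<noteq> x" "dg r0 + 1 \<le> \<rho>" using C11[OF y0] by blast
  have SR: "(\<Sum>v\<in>R. dg v) + \<Delta> + 1 \<le> \<rho>*\<Delta> + \<rho>" using SR_minus r0 by blast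
  have all: "\<forall>y\<in>Y. dg y \<le> \<Delta>" using xmax by auto
  have tt: "2*(n^2+n) \<le> (\<Sum>v\<in>Y. dg v) + (\<Sum>v\<in>R. dg v)" by (rule tot)
  show False
  proof (cases "j = 0")
    case True
    have D1: "\<Delta> = \<rho> + 1" using Delta_eq True by simp
    have nr: "n = \<rho>" using n_eq True by simp
    have c1: "card {y\<in>Y. dg y = \<rho>+1} \<le> 1"
    proof -
      have "card {y\<in>Y. dg y = \<rho>+1} \<le> Suc 0"
        using C10[OF True] D1 finV by (subst card_le_Suc0_iff_eq) auto
      then show ?thesis by simp
    qed
    have sY: "(\<Sum>y\<in>Y. dg y) \<le> \<rho>*\<Delta> + card {y\<in>Y. dg y = \<rho>+1} + (\<Sum>v\<in>{\<rho>+2..\<rho>+1}. v - \<rho>)"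
      using SumY[of "\<rho>+1"] all D1 by simp
    have "n^2 + n = \<rho>*\<Delta>" using nr D1 by (simp add: power2_eq_square algebra_simps)
    then show False using sY c1 SR tt D1 by simp
  next
    case False
    have c2: "card {y\<in>Y. dg y = \<rho>+1} \<le> 2" by (rule C9)
    have DD: "\<Delta> = \<rho> + (2*j+1)" using Delta_eq by simp
    have sY: "(\<Sum>y\<in>Y. dg y) \<le> \<rho>*\<Delta> + card {y\<in>Y. dg y = \<rho>+1} + (\<Sum>v\<in>{\<rho>+2..\<rho>+(2*j+1)}. v - \<rho>)"
      using SumY[of "\<Delta>"] all DD by simp
    have ga: "2 * (\<Sum>v\<in>{\<rho>+2..\<rho>+(2*j+1)}. v - \<rho>) + 2 = (2*j+1)*(2*j+1+1)"
      by (rule gauss) simp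
    show False
      by (rule arithA[OF n_eq Delta_eq _ tt sY c2 SR ga]) (use False in simp)
  qed
qed

end

lemma lin_B2:
  fixes r J S1 S2 c G A B C X :: nat
  assumes "2*A + 4*B + 2*C + 2*r + 2*J \<le> S1 + S2" "X = A + 2*B + r" "2*G + 2 = 4*C + 2*J"
    "S1 \<le> X + c + G" "S2 \<le> X" "c \<le> 2" "1 \<le> J"
  shows "J = 1 \<and> c = 2"
  using assms by linarith

lemma arithB2:
  fixes n r d J S1 S2 c G :: nat
  assumes "n = r + J" "d = r + 2*J + 1" "1 \<le> J" "2*(n^2+n) \<le> S1 + S2"
    "S1 \<le> r*d + c + G" "S2 \<le> r*d" "c \<le> 2" "2*G + 2 = 2*J*(2*J+1)"
  shows "J = 1 \<and> c = 2"
proof -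
  have e1: "2*(n^2 + n) = 2*(r*r) + 4*(r*J) + 2*(J*J) + 2*r + 2*J" using assms(1)
    by (simp add: power2_eq_square algebra_simps)
  have e2: "r*d = r*r + 2*(r*J) + r" using assms(2) by (simp add: algebra_simps)
  have e3: "2*G + 2 = 4*(J*J) + 2*J" using assms(8) by (simp add: algebra_simps)
  show ?thesis
    by (rule lin_B2[of "r*r" "r*J" "J*J" r J S1 S2 "r*d" G c])
      (use assms e1 e2 e3 in simp_all)
qed

lemma arithB2b:
  fixes n r d S1 S2 :: nat
  assumes "n = r + 1" "d = r + 3" "2*(n^2+n) \<le> S1 + S2" "S1 \<le> r*d + 2" "S2 \<le> r*d"
  shows False
proof -
  have "2*(n^2+n) = 2*(r*d) + 4" using assms(1,2) by (simp add: power2_eq_square algebra_simps)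
  then show False using assms(3-5) by linarith
qed

lemma arithB2c:
  fixes n r d S1 S2 G :: nat
  assumes "n = r + 1" "d = r + 3" "2*(n^2+n) \<le> S1 + S2" "S1 \<le> r*d + 2 + G" "2*G+2 = 2*1*(2*1+1)"
  shows "r*d \<le> S2"
proof -
  have e: "2*(n^2+n) = 2*(r*d) + 4" using assms(1,2) by (simp add: power2_eq_square algebra_simps)
  have G2: "G = 2" using assms(5) by simp
  obtain X Q where XQ: "X = r*d" "Q = n^2+n" by blast
  have "2*Q = 2*X + 4" "2*Q \<le> S1 + S2" "S1 \<le> X + 2 + G" using e assms(3,4) XQ by simp_all
  then show ?thesis using G2 XQ by linarith
qed

context maxv begin

lemma caseB2:
  assumes noD: "\<forall>y\<in>Y. dg y \<noteq> \<Delta>" and j1: "1 \<le> j"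
  shows False
proof -
  have allT: "\<forall>y\<in>Y. dg y \<le> \<rho> + 2*j"
  proof
    fix y assume y: "y \<in> Y"
    then have "dg y \<le> \<Delta>" "dg y \<noteq> \<Delta>" using noD xmax by auto
    then show "dg y \<le> \<rho> + 2*j" using Delta_eq by simp
  qed
  have sY: "(\<Sum>y\<in>Y. dg y) \<le> \<rho>*\<Delta> + card {y\<in>Y. dg y = \<rho>+1} + (\<Sum>v\<in>{\<rho>+2..\<rho>+2*j}. v - \<rho>)"
    using SumY[OF allT] .
  have ga: "2*(\<Sum>v\<in>{\<rho>+2..\<rho>+2*j}. v - \<rho>) + 2 = 2*j*(2*j+1)"
    by (rule gauss) (use j1 in simp)
  have Jc: "j = 1 \<and> card {y\<in>Y. dg y = \<rho>+1} = 2"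
    by (rule arithB2[OF n_eq Delta_eq j1 tot sY SR_le C9 ga])
  then have J1: "j = 1" and c2: "card {y\<in>Y. dg y = \<rho>+1} = 2" by auto
  have D3: "\<Delta> = \<rho> + 3" using Delta_eq J1 by simp
  have N1: "n = \<rho> + 1" using n_eq J1 by simp
  obtain y b where yb: "{y\<in>Y. dg y = \<rho>+1} = {y,b}" "y \<noteq> b" using c2 unfolding card_2_iff by blast
  have y: "y \<in> Y" "dg y = \<rho>+1" using yb(1) by blast+
  have b: "b \<in> Y" "dg b = \<rho>+1" using yb(1) by blast+
  have exu: "\<exists>u\<in>Y. dg u = \<rho>+2"
  proof (rule ccontr)
    assume H: "\<not> ?thesis"
    have all1: "\<forall>y\<in>Y. dg y \<le> \<rho>+1"
    proof
      fix z assume z: "z \<in> Y"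
      then have "dg z \<le> \<rho> + 2" "dg z \<noteq> \<rho> + 2" using allT J1 H by auto
      then show "dg z \<le> \<rho>+1" by simp
    qed
    have "(\<Sum>y\<in>Y. dg y) \<le> \<rho>*\<Delta> + card {y\<in>Y. dg y = \<rho>+1} + (\<Sum>v\<in>{\<rho>+2..\<rho>+1}. v - \<rho>)"
      using SumY[OF all1] .
    then have "(\<Sum>y\<in>Y. dg y) \<le> \<rho>*\<Delta> + 2" using c2 by simp
    then show False using arithB2b[OF N1 D3 tot _ SR_le] by simp
  qed
  then obtain u where u: "u \<in> Y" "dg u = \<rho> + 2" by blast
  have SRge: "\<rho>*\<Delta> \<le> (\<Sum>v\<in>R. dg v)"
  proof -
    have g2: "2*(\<Sum>v\<in>{\<rho>+2..\<rho>+2*1}. v - \<rho>) + 2 = 2*1*(2*1+1)" using ga J1 by simp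
    have "(\<Sum>y\<in>Y. dg y) \<le> \<rho>*\<Delta> + 2 + (\<Sum>v\<in>{\<rho>+2..\<rho>+2*1}. v - \<rho>)" using sY c2 J1 by simp
    then show ?thesis using arithB2c[OF N1 D3 tot _ g2] by simp
  qed
  have Rfull: "\<forall>r\<in>R. dg r = \<Delta>"
  proof (rule ccontr)
    assume "\<not> ?thesis"
    then obtain r where r: "r \<in> R" "dg r \<noteq> \<Delta>" by blast
    then have "dg r < \<Delta>" using xmax by (simp add: order_less_le)
    then have "(\<Sum>v\<in>R. dg v) < (\<Sum>v\<in>R. \<Delta>)"
      using r xmax by (intro sum_strict_mono_ex1[OF finR]) auto
    then show False using SRge by simp
  qed
  have yR: "y \<notin> R" "b \<notin> R" using y b by auto
  have cins: "card (insert y R) = \<rho> + 1" "card (insert b R) = \<rho> + 1" using yR finR by auto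
  have s1: "nb b \<subseteq> insert y R" using TW[of y b] y b yb(2) by simp
  have s2: "nb y \<subseteq> insert b R" using TW[of b y] y b yb(2) by simp
  have nbb: "nb b = insert y R"
    by (rule card_subset_eq[OF _ s1]) (use finR cins b deg_def'[of b] in simp_all)
  have nby: "nb y = insert b R"
    by (rule card_subset_eq[OF _ s2]) (use finR cins y deg_def'[of y] in simp_all)
  have Rind: "\<not> E r1 r2" if r12: "r1 \<in> R" "r2 \<in> R" for r1 r2
  proof
    assume e: "E r1 r2"
    have e1: "E y r1" using nby r12 by blast
    have "E b r2" using nbb r12 by blast
    then have e3: "E r2 b" using symE by blast
    have "r1 \<noteq> r2" using e irr by blast
    then have "distinct [y, r1, r2, b]" using r12 yR yb(2) by auto
    then show False using nopath[OF e1 e e3] y b by simp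
  qed
  have nbr: "nb r = Y" if r: "r \<in> R" for r
  proof -
    have sub: "nb r \<subseteq> Y" using Rind[OF r] by blast
    show ?thesis
      by (rule card_subset_eq[OF finY sub]) (use Rfull r cardY deg_def'[of r] in simp)
  qed
  obtain w where w: "w \<in> Y" "E u w"
  proof -
    have "\<not> nb u \<subseteq> R"
    proof
      assume "nb u \<subseteq> R"
      then have "dg u \<le> \<rho>" unfolding deg_def' using finR by (simp add: card_mono)
      then show False using u by simp
    qed
    then show ?thesis using that by blast
  qed
  have uR: "u \<notin> R" using u by blast
  have wy: "w \<noteq> y"
  proof
    assume "w = y"
    then have "u \<in> nb y" using w symE[of u w] u by auto
    then show False using nby uR u b by auto
  qed
  have wb: "w \<noteq> b"
  proof
    assume "w = b"
    then have "u \<in> nb b" using w symE[of u w] u by auto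
    then show False using nbb uR u y by auto
  qed
  have sub: "insert u R \<subseteq> nb w"
  proof
    fix z assume z: "z \<in> insert u R"
    show "z \<in> nb w"
    proof (cases "z = u")
      case True
      then show ?thesis using w symE[of u w] u by auto
    next
      case False
      then have zR: "z \<in> R" using z by blast
      then have "E z w" using nbr[OF zR] w by blast
      then show ?thesis using symE[of z w] zR by auto
    qed
  qed
  have "card (insert u R) \<le> dg w" unfolding deg_def' by (rule card_mono[OF fin_nb sub])
  then have lo: "\<rho> + 1 \<le> dg w" using uR finR by simp
  have hi: "dg w \<le> \<rho> + 2" using allT w J1 by auto
  show False
  proof (cases "dg w = \<rho> + 1")
    case True
    then have "w \<in> {y\<in>Y. dg y = \<rho>+1}" using w by blast
    then show False using yb(1) wy wb by blast
  next
    case False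
    then have "dg w = dg u" using lo hi u by simp
    then have "w = u" using C8[of w u] w u by simp
    then show False using w irr by blast
  qed
qed

end

context maxv begin

lemma caseB1:
  assumes noD: "\<forall>y\<in>Y. dg y \<noteq> \<Delta>" and j0: "j = 0"
  shows "card R = n \<and> card Y = n + 1 \<and> (\<forall>u\<in>V. \<forall>v\<in>V. E u v \<longleftrightarrow> (u \<in> R \<and> v \<in> Y) \<or> (u \<in> Y \<and> v \<in> R))"
proof -
  have D1: "\<Delta> = \<rho> + 1" using Delta_eq j0 by simp
  have nr: "n = \<rho>" using n_eq j0 by simp
  have allY: "\<forall>y\<in>Y. dg y \<le> \<rho>"
  proof
    fix y assume y: "y \<in> Y"
    then have "dg y \<le> \<Delta>" "dg y \<noteq> \<Delta>" using noD xmax by auto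
    then show "dg y \<le> \<rho>" using D1 by simp
  qed
  have SY: "(\<Sum>v\<in>Y. dg v) \<le> \<Delta> * \<rho>"
    using sum_bounded_above[of Y dg \<rho>] allY cardY by simp
  have SR: "(\<Sum>v\<in>R. dg v) \<le> \<rho> * \<Delta>" by (rule SR_le)
  have e: "n^2 + n = \<rho>*\<Delta>" using nr D1 by (simp add: power2_eq_square algebra_simps)
  have tt: "2*(n^2+n) \<le> (\<Sum>v\<in>Y. dg v) + (\<Sum>v\<in>R. dg v)" by (rule tot)
  have SYeq: "(\<Sum>v\<in>Y. dg v) = \<Delta> * \<rho>" using SY SR tt e by (simp add: mult.commute)
  have SReq: "(\<Sum>v\<in>R. dg v) = \<rho> * \<Delta>" using SY SR tt e by (simp add: mult.commute)
  have Yfull: "\<forall>y\<in>Y. dg y = \<rho>"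
  proof (rule ccontr)
    assume "\<not> ?thesis"
    then obtain y where y: "y \<in> Y" "dg y \<noteq> \<rho>" by blast
    then have "dg y < \<rho>" using allY by (simp add: order_less_le)
    then have "(\<Sum>v\<in>Y. dg v) < (\<Sum>v\<in>Y. \<rho>)"
      using y allY by (intro sum_strict_mono_ex1[OF finY]) auto
    then show False using SYeq cardY by simp
  qed
  have Rfull: "\<forall>r\<in>R. dg r = \<Delta>"
  proof (rule ccontr)
    assume "\<not> ?thesis"
    then obtain r where r: "r \<in> R" "dg r \<noteq> \<Delta>" by blast
    then have "dg r < \<Delta>" using xmax by (simp add: order_less_le)
    then have "(\<Sum>v\<in>R. dg v) < (\<Sum>v\<in>R. \<Delta>)"
      using r xmax by (intro sum_strict_mono_ex1[OF finR]) auto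
    then show False using SReq by simp
  qed
  have xnY: "x \<notin> Y" using not_in_nb by simp
  have Yind: "\<not> E y1 y2" if y12: "y1 \<in> Y" "y2 \<in> Y" for y1 y2
  proof
    assume e12: "E y1 y2"
    have "card (Y - {y1, y2}) \<noteq> 0"
    proof -
      have "Y \<subseteq> (Y - {y1,y2}) \<union> {y1,y2}" by blast
      then have "card Y \<le> card ((Y - {y1,y2}) \<union> {y1,y2})" using finY by (intro card_mono) auto
      also have "\<dots> \<le> card (Y - {y1,y2}) + card {y1,y2}" by (rule card_Un_le)
      finally have "card Y \<le> card (Y - {y1,y2}) + card {y1,y2}" .
      moreover have "card {y1,y2} \<le> 2" by (simp add: card_insert_le_m1)
      moreover have "card Y = n + 1" using cardY D1 nr by simp
      ultimately show ?thesis using n2 by linarith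
    qed
    then have "Y - {y1, y2} \<noteq> {}" by (metis card.empty)
    then obtain y3 where y3: "y3 \<in> Y" "y3 \<noteq> y1" "y3 \<noteq> y2" by blast
    have "y2 = y3"
      apply (rule L3[of x y3 y2 y1])
      using y12 y3 e12 symE[of y1 y2] Yfull xnY by auto
    then show False using y3 by simp
  qed
  have nby: "nb y = R" if y: "y \<in> Y" for y
  proof -
    have sub: "nb y \<subseteq> R" using Yind[OF y] by blast
    show ?thesis
      by (rule card_subset_eq[OF finR sub]) (use Yfull y deg_def'[of y] in simp)
  qed
  have nbr: "nb r = Y" if r: "r \<in> R" for r
  proof -
    have sub: "Y \<subseteq> nb r"
    proof
      fix y assume y: "y \<in> Y"
      then have "E y r" using nby[OF y] r by blast
      then have "E r y" by (rule symE)
      then show "y \<in> nb r" using y nb_sub by blast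
    qed
    have "Y = nb r"
      by (rule card_subset_eq[OF fin_nb sub]) (use Rfull r cardY deg_def'[of r] in simp)
    then show ?thesis by simp
  qed
  have fin: "\<forall>u\<in>V. \<forall>v\<in>V. E u v \<longleftrightarrow> (u \<in> R \<and> v \<in> Y) \<or> (u \<in> Y \<and> v \<in> R)"
  proof (intro ballI)
    fix u v assume u: "u \<in> V" and v: "v \<in> V"
    have "E u v \<longleftrightarrow> v \<in> nb u" using v by simp
    show "E u v \<longleftrightarrow> (u \<in> R \<and> v \<in> Y) \<or> (u \<in> Y \<and> v \<in> R)"
    proof (cases "u \<in> Y")
      case True
      then show ?thesis using nby[OF True] v by blast
    next
      case False
      then have uR: "u \<in> R" using u by blast
      then show ?thesis using nbr[OF uR] v False by blast
    qed
  qed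
  show ?thesis using fin nr D1 cardY by simp
qed

end

context p4free begin

lemma kstruct:
  assumes medges: "n^2 + n \<le> num_edges V E"
  shows "\<exists>R Y. V = R \<union> Y \<and> R \<inter> Y = {} \<and> card R = n \<and> card Y = n + 1 \<and>
     (\<forall>u\<in>V. \<forall>v\<in>V. E u v \<longleftrightarrow> (u \<in> R \<and> v \<in> Y) \<or> (u \<in> Y \<and> v \<in> R))"
proof -
  have Vne: "V \<noteq> {}" using cardV by auto
  have "Max (dg ` V) \<in> dg ` V" using finV Vne by (intro Max_in) auto
  then obtain x where xV: "x \<in> V" and xM: "dg x = Max (dg ` V)" by auto
  have xmax: "\<forall>v\<in>V. dg v \<le> dg x" using finV xM by auto
  interpret M: maxv V E n x
    by (unfold_locales) (use xV xmax medges in auto)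
  show ?thesis
  proof (cases "\<exists>y\<in>nb x. dg y = dg x")
    case True
    then obtain y0 where "y0 \<in> nb x" "dg y0 = dg x" by blast
    then show ?thesis using M.caseA by blast
  next
    case False
    then have noD: "\<forall>y\<in>nb x. dg y \<noteq> dg x" by blast
    show ?thesis
    proof (cases "n - card (V - nb x) = 0")
      case True
      have "card (V - nb x) = n \<and> card (nb x) = n + 1 \<and>
        (\<forall>u\<in>V. \<forall>v\<in>V. E u v \<longleftrightarrow> (u \<in> V - nb x \<and> v \<in> nb x) \<or> (u \<in> nb x \<and> v \<in> V - nb x))"
        by (rule M.caseB1[OF noD True])
      moreover have "V = (V - nb x) \<union> nb x" by blast
      moreover have "(V - nb x) \<inter> nb x = {}" by blast
      ultimately show ?thesis by blast
    next
      case False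
      then have "1 \<le> n - card (V - nb x)" by simp
      then show ?thesis using M.caseB2[OF noD] by blast
    qed
  qed
qed

end

theorem theorem1p3:
  fixes n :: nat and V :: "'a set" and E :: "'a \<Rightarrow> 'a \<Rightarrow> bool"
  assumes "n \<ge> 2"
    and "simple_graph V E"
    and "card V = 2 * n + 1"
    and "num_edges V E \<ge> n ^ 2 + n"
    and "\<forall>a\<in>V. \<forall>b\<in>V. a \<noteq> b \<and> degree V E a = degree V E b \<longrightarrow> \<not> path3 V E a b"
  shows "graph_iso V E (Kbip_verts n (n + 1)) (Kbip_edge n (n + 1))"
proof -
  interpret P: p4free V E n
    by (unfold_locales) (use assms in auto)
  obtain R Y where RY: "V = R \<union> Y" "R \<inter> Y = {}" "card R = n" "card Y = n + 1"
    and Ed: "\<forall>u\<in>V. \<forall>v\<in>V. E u v \<longleftrightarrow> (u \<in> R \<and> v \<in> Y) \<or> (u \<in> Y \<and> v \<in> R)"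
    using P.kstruct assms(4) by blast
  have finR: "finite R" and finY: "finite Y" using P.finV RY(1) by auto
  obtain g1 where g1: "bij_betw g1 R {0..<n}" using ex_bij_betw_finite_nat[OF finR] RY(3) by auto
  obtain g2 where g2: "bij_betw g2 Y {0..<n+1}" using ex_bij_betw_finite_nat[OF finY] RY(4) by auto
  define f where "f = (\<lambda>v. if v \<in> R then g1 v else n + g2 v)"
  have b1: "bij_betw f R {0..<n}"
    using g1 by (rule bij_betw_cong[THEN iffD1, rotated]) (simp add: f_def)
  have sh: "bij_betw (\<lambda>i. n + i) {0..<n+1} {n..<n+(n+1)}"
  proof (rule bij_betw_imageI)
    show "inj_on (\<lambda>i. n + i) {0..<n+1}" by (simp add: inj_on_def)
    show "(\<lambda>i. n + i) ` {0..<n+1} = {n..<n+(n+1)}"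
    proof
      show "(\<lambda>i. n + i) ` {0..<n+1} \<subseteq> {n..<n+(n+1)}" by auto
      show "{n..<n+(n+1)} \<subseteq> (\<lambda>i. n + i) ` {0..<n+1}"
      proof
        fix k assume "k \<in> {n..<n+(n+1)}"
        then have "k = n + (k - n)" "k - n \<in> {0..<n+1}" by auto
        then show "k \<in> (\<lambda>i. n + i) ` {0..<n+1}" by blast
      qed
    qed
  qed
  have b2': "bij_betw (\<lambda>v. n + g2 v) Y {n..<n+(n+1)}"
    using bij_betw_trans[OF g2 sh] by (simp add: comp_def)
  have b2: "bij_betw f Y {n..<n+(n+1)}"
    using b2' by (rule bij_betw_cong[THEN iffD1, rotated]) (use RY(2) in \<open>auto simp: f_def\<close>)
  have bb: "bij_betw f (R \<union> Y) ({0..<n} \<union> {n..<n+(n+1)})"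
    by (rule bij_betw_combine[OF b1 b2]) auto
  have iv: "{0..<n} \<union> {n..<n+(n+1)} = Kbip_verts n (n+1)"
    unfolding Kbip_verts_def by auto
  have bij: "bij_betw f V (Kbip_verts n (n+1))" using bb iv RY(1) by simp
  have fR: "f v < n" if "v \<in> R" for v using b1 that by (auto dest: bij_betw_apply)
  have fY: "n \<le> f v \<and> f v < n + (n+1)" if "v \<in> Y" for v
    using b2 that by (auto dest: bij_betw_apply)
  have edges: "\<forall>u\<in>V. \<forall>v\<in>V. E u v \<longleftrightarrow> Kbip_edge n (n+1) (f u) (f v)"
  proof (intro ballI)
    fix u v assume u: "u \<in> V" and v: "v \<in> V"
    have cu: "(u \<in> R \<and> f u < n) \<or> (u \<in> Y \<and> n \<le> f u \<and> f u < n + (n+1))"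
      using u RY(1) fR fY by blast
    have cv: "(v \<in> R \<and> f v < n) \<or> (v \<in> Y \<and> n \<le> f v \<and> f v < n + (n+1))"
      using v RY(1) fR fY by blast
    show "E u v \<longleftrightarrow> Kbip_edge n (n+1) (f u) (f v)"
      using Ed u v cu cv RY(2) unfolding Kbip_edge_def by auto
  qed
  show ?thesis unfolding graph_iso_def using bij edges by blast
qed


end
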